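(* Let $d\in\mathbb{N}$. Then there exists a $\left(d+1,\frac{1}{2d}\right)$-secluded unit hypercube partition $\mathcal{P}$ of $\mathbb{R}^{d}$. That is, for every point $\vec{p}\in\mathbb{R}^{d}$, \[\left|\mathcal{N}_{\frac{1}{2d}}(\vec{p})\right|\leq d+1.\]
   Context: $\mathbb{N}$ denotes the positive integers. On $\mathbb{R}^d$ use the metric $d_{max}(\vec{x},\vec{y})=\max_{i\in[d]}|x_i-y_i|$ (the $\ell^\infty$ metric); $\overline{B}_{\epsilon}(\vec{p})=\{\vec{x}\in\mathbb{R}^d: d_{max}(\vec{x},\vec{p})\le\epsilon\}$ is the closed ball. For a partition $\mathcal{P}$ of $\mathbb{R}^d$, $\vec{p}\in\mathbb{R}^d$ and $\epsilon>0$, $\mathcal{N}_{\epsilon}(\vec{p})=\{X\in\mathcal{P}: X\cap\overline{B}_{\epsilon}(\vec{p})\neq\emptyset\}$. A partition $\mathcal{P}$ of $\mathbb{R}^d$ is $(k,\epsilon)$-secluded if $|\mathcal{N}_\epsilon(\vec{p})|\le k$ for every $\vec{p}\in\mathbb{R}^d$. A unit hypercube is a set of the form $\vec{a}+[0,1)^d$ with $\vec{a}\in\mathbb{R}^d$; a unit hypercube partition is a partition of $\mathbb{R}^d$ all of whose members are unit hypercubes. *)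

theory Defs
  imports "HOL-Analysis.Analysis"
begin

text \<open>Points of R^d are vectors of type real^'n with d = CARD('n).\<close>

definition dmax :: "real^'n \<Rightarrow> real^'n \<Rightarrow> real" where
  "dmax x y = Max (range (\<lambda>i. \<bar>x $ i - y $ i\<bar>))"

definition closed_ball_max :: "real \<Rightarrow> real^'n \<Rightarrow> (real^'n) set" where
  "closed_ball_max e p = {x. dmax x p \<le> e}"

definition is_partition :: "'a set set \<Rightarrow> 'a set \<Rightarrow> bool" where
  "is_partition P S \<longleftrightarrow> (\<forall>X\<in>P. X \<noteq> {}) \<and> (\<forall>X\<in>P. \<forall>Y\<in>P. X \<noteq> Y \<longrightarrow> X \<inter> Y = {}) \<and> \<Union>P = S"

definition neighborhood :: "(real^'n) set set \<Rightarrow> real \<Rightarrow> real^'n \<Rightarrow> (real^'n) set set" where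
  "neighborhood P e p = {X\<in>P. X \<inter> closed_ball_max e p \<noteq> {}}"

definition secluded :: "(real^'n) set set \<Rightarrow> nat \<Rightarrow> real \<Rightarrow> bool" where
  "secluded P k e \<longleftrightarrow> is_partition P UNIV \<and>
     (\<forall>p. finite (neighborhood P e p) \<and> card (neighborhood P e p) \<le> k)"

definition unit_hypercube :: "(real^'n) set \<Rightarrow> bool" where
  "unit_hypercube X \<longleftrightarrow> (\<exists>a. X = {x. \<forall>i. a $ i \<le> x $ i \<and> x $ i < a $ i + 1})"

definition unit_hypercube_partition :: "(real^'n) set set \<Rightarrow> bool" where
  "unit_hypercube_partition P \<longleftrightarrow> is_partition P UNIV \<and> (\<forall>X\<in>P. unit_hypercube X)"

end

theory Submission
  imports Defs
begin

definition sw :: "('n \<Rightarrow> nat) \<Rightarrow> ('n::finite \<Rightarrow> int) \<Rightarrow> nat \<Rightarrow> int" where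
  "sw h m k = (\<Sum>j\<in>{j. h j < k}. int (h j + 1) * m j)"

definition av :: "('n::finite \<Rightarrow> nat) \<Rightarrow> ('n \<Rightarrow> int) \<Rightarrow> real^'n" where
  "av h m = (\<chi> i. real_of_int (m i) + real_of_int (sw h m (h i)) / real CARD('n))"

definition cube :: "real^'n \<Rightarrow> (real^'n) set" where
  "cube a = {x. \<forall>i. a$i \<le> x$i \<and> x$i < a$i + 1}"

lemma sw_cong: "(\<And>j. h j < k \<Longrightarrow> m j = m' j) \<Longrightarrow> sw h m k = sw h m' k"
  unfolding sw_def by (rule sum.cong) auto

lemma sw_diff: "sw h (\<lambda>i. m i - m' i) k = sw h m k - sw h m' k"
  unfolding sw_def by (simp add: right_diff_distrib sum_subtractf)

lemma sw_Suc:
  assumes "bij_betw h UNIV {..<CARD('n::finite)}" "k < CARD('n)"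
  shows "sw h (m::'n \<Rightarrow> int) (Suc k) = sw h m k + int (k+1) * m (inv h k)"
proof -
  have hk: "h (inv h k) = k" using assms by (meson bij_betw_inv_into_right lessThan_iff)
  have "{j. h j < Suc k} = insert (inv h k) {j. h j < k}" using hk
    using assms(1) by (auto simp: less_Suc_eq bij_betw_def)
  then show ?thesis unfolding sw_def using hk by simp
qed

lemma cover:
  fixes x :: "real^'n::finite"
  assumes "inj h"
  shows "\<exists>m. x \<in> cube (av h m)"
proof -
  have "\<exists>m. \<forall>i. h i < k \<longrightarrow> av h m $ i \<le> x$i \<and> x$i < av h m $ i + 1" for k
  proof (induction k)
    case 0 then show ?case by simp
  next
    case (Suc k)
    then obtain m where m: "\<forall>i. h i < k \<longrightarrow> av h m $ i \<le> x$i \<and> x$i < av h m $ i + 1" by blast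
    show ?case
    proof (cases "\<exists>i0. h i0 = k")
      case False
      then show ?thesis using m by (metis less_SucE)
    next
      case True
      then obtain i0 where i0: "h i0 = k" by blast
      define m' where "m' = m(i0 := \<lfloor>x$i0 - real_of_int (sw h m k) / real CARD('n)\<rfloor>)"
      have sweq: "sw h m' k' = sw h m k'" if "k' \<le> k" for k'
        using that i0 unfolding m'_def by (intro sw_cong) auto
      show ?thesis
      proof (intro exI allI impI)
        fix i assume "h i < Suc k"
        then consider "h i < k" | "i = i0" using i0 assms by (metis injD less_SucE)
        then show "av h m' $ i \<le> x$i \<and> x$i < av h m' $ i + 1"
        proof cases
          case 1
          then have "i \<noteq> i0" using i0 by auto
          then have "av h m' $ i = av h m $ i" using sweq[of "h i"] 1
            unfolding av_def m'_def by simp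
          then show ?thesis using m 1 by simp
        next
          case 2
          have "av h m' $ i = real_of_int \<lfloor>x$i0 - real_of_int (sw h m k) / real CARD('n)\<rfloor>
              + real_of_int (sw h m k) / real CARD('n)"
            using 2 i0 sweq[of k] unfolding av_def by (simp add: m'_def)
          moreover have "real_of_int \<lfloor>x$i0 - real_of_int (sw h m k) / real CARD('n)\<rfloor> \<le> x$i0 - real_of_int (sw h m k) / real CARD('n)"
            "x$i0 - real_of_int (sw h m k) / real CARD('n) < real_of_int \<lfloor>x$i0 - real_of_int (sw h m k) / real CARD('n)\<rfloor> + 1"
            by linarith+
          ultimately show ?thesis unfolding 2 by linarith
        qed
      qed
    qed
  qed
  then obtain m where "\<forall>i. h i < Max (range h) + 1 \<longrightarrow> av h m $ i \<le> x$i \<and> x$i < av h m $ i + 1"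
    by blast
  then have "x \<in> cube (av h m)" unfolding cube_def
    by (simp add: le_imp_less_Suc)
  then show ?thesis by blast
qed

lemma disj:
  fixes x :: "real^'n::finite"
  assumes "x \<in> cube (av h m)" "x \<in> cube (av h m')"
  shows "m = m'"
proof -
  have "\<forall>i. h i < k \<longrightarrow> m i = m' i" for k
  proof (induction k)
    case 0 then show ?case by simp
  next
    case (Suc k)
    show ?case
    proof (intro allI impI)
      fix i assume "h i < Suc k"
      then consider "h i < k" | "h i = k" by linarith
      then show "m i = m' i"
      proof cases
        case 1 then show ?thesis using Suc by blast
      next
        case 2
        have "sw h m k = sw h m' k" using Suc by (intro sw_cong) auto
        then have "av h m $ i - av h m' $ i = real_of_int (m i - m' i)"
          unfolding av_def using 2 by simp
        moreover have "\<bar>av h m $ i - av h m' $ i\<bar> < 1" using assms unfolding cube_def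
          by (smt (verit, best) mem_Collect_eq)
        ultimately have "\<bar>m i - m' i\<bar> < 1" by linarith
        then show ?thesis by simp
      qed
    qed
  qed
  then show ?thesis by (meson ext lessI)
qed

lemma step_int:
  fixes D s n k :: int
  assumes "\<bar>s\<bar> \<le> k" "k + 1 \<le> D" "\<bar>D*n + s\<bar> \<le> D" "0 \<le> k"
  shows "\<bar>s + (k+1)*n\<bar> \<le> k+1"
proof -
  have "n \<in> {-1,0,1}"
  proof (rule ccontr)
    assume "n \<notin> {-1,0,1}"
    then consider "n \<ge> 2" | "n \<le> -2" by fastforce
    then show False
    proof cases
      case 1
      then have "D*n \<ge> D*2" using assms by (intro mult_left_mono) auto
      then show False using assms by linarith
    next
      case 2
      then have "D*n \<le> D*(-2)" using assms by (intro mult_left_mono) auto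
      then show False using assms by linarith
    qed
  qed
  then show ?thesis using assms by auto
qed

lemma zero_int:
  fixes s n k :: int
  assumes "\<bar>s\<bar> \<le> k" "0 \<le> k" "s + (k+1)*n = 0"
  shows "n = 0"
proof (rule ccontr)
  assume "n \<noteq> 0"
  then have "\<bar>n\<bar> \<ge> 1" by linarith
  then have "(k+1) * \<bar>n\<bar> \<ge> (k+1) * 1" using assms by (intro mult_left_mono) auto
  then have "\<bar>(k+1)*n\<bar> \<ge> k+1" using assms by (simp add: abs_mult)
  then show False using assms by linarith
qed

lemma bound:
  assumes bij: "bij_betw (h::'n::finite \<Rightarrow> nat) UNIV {..<CARD('n)}"
    and T: "\<forall>i. \<bar>int CARD('n) * n i + sw h n (h i)\<bar> \<le> int CARD('n)"
  shows "k \<le> CARD('n) \<Longrightarrow> \<bar>sw h n k\<bar> \<le> int k"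
proof (induction k)
  case 0 then show ?case by (simp add: sw_def)
next
  case (Suc k)
  then have k: "k < CARD('n)" by simp
  have hk: "h (inv h k) = k" using bij k by (meson bij_betw_inv_into_right lessThan_iff)
  have "\<bar>sw h n k + int (k+1) * n (inv h k)\<bar> \<le> int k + 1"
    using step_int[of "sw h n k" "int k" "int CARD('n)" "n (inv h k)"] Suc k T[rule_format, of "inv h k"] hk
    by (simp add: add.commute)
  then show ?case using sw_Suc[OF bij k] by simp
qed

lemma key:
  assumes bij: "bij_betw (h::'n::finite \<Rightarrow> nat) UNIV {..<CARD('n)}"
    and T: "\<forall>i. \<bar>int CARD('n) * n i + sw h n (h i)\<bar> \<le> int CARD('n)"
    and il: "h il = CARD('n) - 1"
    and Z: "int CARD('n) * n il + sw h n (CARD('n) - 1) = 0"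
  shows "n i = 0"
proof -
  let ?d = "CARD('n)"
  have d: "?d \<ge> 1" by (simp add: Suc_leI)
  have b: "\<And>k. k \<le> ?d \<Longrightarrow> \<bar>sw h n k\<bar> \<le> int k" using bound[OF bij T] by blast
  have "n il = 0"
    using zero_int[of "sw h n (?d - 1)" "int (?d - 1)" "n il"] b[of "?d - 1"] Z d
    by (simp add: of_nat_diff)
  with Z have s0: "sw h n (?d - 1) = 0" by simp
  have down: "j \<le> ?d - 1 \<Longrightarrow> sw h n (?d - 1 - j) = 0" for j
  proof (induction j)
    case 0 then show ?case using s0 by simp
  next
    case (Suc j)
    define k where "k = ?d - 1 - Suc j"
    have kd: "k < ?d" and ks: "Suc k = ?d - 1 - j" using Suc.prems d unfolding k_def by auto
    have "sw h n k + int (k+1) * n (inv h k) = 0"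
      using sw_Suc[of h k n] bij kd Suc ks by simp
    moreover have "\<bar>sw h n k\<bar> \<le> int k" using b kd by simp
    ultimately have "n (inv h k) = 0" using zero_int[of "sw h n k" "int k" "n (inv h k)"] by (simp add: add.commute)
    then show ?case using \<open>sw h n k + int (k+1) * n (inv h k) = 0\<close> k_def by simp
  qed
  have hi: "h i < ?d" using bij by (auto simp: bij_betw_def)
  show ?thesis
  proof (cases "h i = ?d - 1")
    case True
    then have "i = il" using il bij by (metis bij_betw_imp_inj_on injD)
    then show ?thesis using \<open>n il = 0\<close> by simp
  next
    case False
    then have lt: "h i < ?d - 1" using hi by simp
    have inv: "inv h (h i) = i" using bij by (meson bij_betw_def inv_f_f)
    have "sw h n (h i) = 0" using down[of "?d - 1 - h i"] lt by simp
    moreover have "sw h n (Suc (h i)) = 0" using down[of "?d - 1 - Suc (h i)"] lt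
      by (simp add: Suc_diff_Suc)
    ultimately have "int (h i + 1) * n i = 0" using sw_Suc[OF bij hi, of n] inv by simp
    then show ?thesis by simp
  qed
qed

lemma dmax_le: "dmax x p \<le> e \<Longrightarrow> \<bar>x $ i - p $ i\<bar> \<le> e"
proof -
  have "\<bar>x $ i - p $ i\<bar> \<le> dmax x p" unfolding dmax_def by (rule Max_ge) auto
  then show "dmax x p \<le> e \<Longrightarrow> \<bar>x $ i - p $ i\<bar> \<le> e" by linarith
qed

lemma av_scaled: "real CARD('n) * av (h::'n::finite \<Rightarrow> nat) m $ i = real_of_int (int CARD('n) * m i + sw h m (h i))"
  unfolding av_def by (simp add: field_simps)

lemma near:
  assumes "x \<in> cube (av h m)" "dmax x p \<le> e"
  shows "av h m $ i \<le> p$i + e" "p$i - e - 1 < av h m $ i"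
proof -
  have "av h m $ i \<le> x$i" "x$i < av h m $ i + 1" using assms(1) unfolding cube_def by auto
  then show "av h m $ i \<le> p$i + e" "p$i - e - 1 < av h m $ i" using dmax_le[OF assms(2), of i] by linarith+
qed

theorem mainTheorem1:
  shows "\<exists>P :: (real^'n) set set. unit_hypercube_partition P \<and>
           secluded P (CARD('n) + 1) (1 / (2 * real CARD('n)))"
proof -
  let ?d = "CARD('n)"
  have d: "?d \<ge> 1" by (simp add: Suc_leI)
  obtain h :: "'n \<Rightarrow> nat" where bij0: "bij_betw h UNIV {0..<card (UNIV::'n set)}"
    using ex_bij_betw_finite_nat[of "UNIV::'n set"] by auto
  then have bij: "bij_betw h UNIV {..<?d}" by (simp add: atLeast0LessThan)
  then have inj: "inj h" by (simp add: bij_betw_def)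
  define P where "P = range (\<lambda>m. cube (av h m) :: (real^'n) set)"
  have part: "is_partition P UNIV"
    unfolding is_partition_def
  proof (intro conjI ballI impI)
    fix X assume "X \<in> P"
    then obtain m where "X = cube (av h m)" unfolding P_def by blast
    then show "X \<noteq> {}" unfolding cube_def by force
  next
    fix X Y assume "X \<in> P" "Y \<in> P" "X \<noteq> Y"
    then obtain m m' where "X = cube (av h m)" "Y = cube (av h m')" unfolding P_def by blast
    then show "X \<inter> Y = {}" using disj \<open>X \<noteq> Y\<close> by blast
  next
    show "\<Union> P = UNIV" unfolding P_def using cover[OF inj] by blast
  qed
  have uhp: "unit_hypercube_partition P"
    unfolding unit_hypercube_partition_def using part
    by (auto simp: P_def unit_hypercube_def cube_def)
  define e :: real where "e = 1 / (2 * real ?d)"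
  have de: "real ?d * e = 1/2" unfolding e_def using d by simp
  define il where "il = inv h (?d - 1)"
  have il: "h il = ?d - 1" unfolding il_def using bij d
    by (intro bij_betw_inv_into_right[OF bij]) auto
  have sec: "finite (neighborhood P e p) \<and> card (neighborhood P e p) \<le> ?d + 1" for p
  proof -
    define Mp where "Mp = {m. cube (av h m) \<inter> closed_ball_max e p \<noteq> {}}"
    have nb: "neighborhood P e p = (\<lambda>m. cube (av h m)) ` Mp"
      unfolding neighborhood_def P_def Mp_def by auto
    have nearM: "av h m $ i \<le> p$i + e \<and> p$i - e - 1 < av h m $ i" if mM: "m \<in> Mp" for m i
    proof -
      obtain x where "x \<in> cube (av h m)" "dmax x p \<le> e"
        using mM unfolding Mp_def closed_ball_max_def by auto
      then show ?thesis using near[of x h m p e i] unfolding closed_ball_max_def by auto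
    qed
    define g where "g m = int ?d * m il + sw h m (?d - 1)" for m :: "'n \<Rightarrow> int"
    have gav: "real_of_int (g m) = real ?d * av h m $ il" for m
      unfolding g_def using av_scaled[of h m il] il by simp
    define F where "F = \<lfloor>real ?d * p$il + 1/2\<rfloor>"
    have grange: "g ` Mp \<subseteq> {F - int ?d .. F}"
    proof
      fix y assume "y \<in> g ` Mp"
      then obtain m where m: "m \<in> Mp" "y = g m" by blast
      have "real ?d * av h m $ il \<le> real ?d * (p$il + e)"
        using nearM[OF m(1)] by (intro mult_left_mono) auto
      then have u: "real_of_int y \<le> real ?d * p$il + 1/2" using gav m de by (simp add: algebra_simps)
      have "real ?d * (p$il - e - 1) < real ?d * av h m $ il"
        using nearM[OF m(1)] d by (intro mult_strict_left_mono) auto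
      then have l: "real ?d * p$il - 1/2 - real ?d < real_of_int y"
        using gav m de by (simp add: algebra_simps)
      have "y \<le> F" unfolding F_def using u by (simp add: le_floor_iff)
      moreover have "F - int ?d \<le> y" unfolding F_def using l by linarith
      ultimately show "y \<in> {F - int ?d .. F}" by simp
    qed
    have ginj: "inj_on g Mp"
    proof
      fix m m' assume mm: "m \<in> Mp" "m' \<in> Mp" "g m = g m'"
      define n where "n i = m i - m' i" for i
      have swn: "sw h n k = sw h m k - sw h m' k" for k
        unfolding n_def by (rule sw_diff)
      have T: "\<forall>i. \<bar>int ?d * n i + sw h n (h i)\<bar> \<le> int ?d"
      proof
        fix i
        have eq: "real_of_int (int ?d * n i + sw h n (h i)) = real ?d * (av h m $ i - av h m' $ i)"
          using av_scaled[of h m i] av_scaled[of h m' i] swn[of "h i"]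
          by (simp add: n_def algebra_simps)
        have "\<bar>av h m $ i - av h m' $ i\<bar> < 1 + 2*e" using nearM[OF mm(1), of i] nearM[OF mm(2), of i] by linarith
        then have "real ?d * \<bar>av h m $ i - av h m' $ i\<bar> < real ?d * (1 + 2*e)"
          using d by (intro mult_strict_left_mono) auto
        moreover have "\<bar>real_of_int (int ?d * n i + sw h n (h i))\<bar> = real ?d * \<bar>av h m $ i - av h m' $ i\<bar>"
          unfolding eq by (simp add: abs_mult)
        moreover have "real ?d * (1 + 2*e) = real ?d + 1" using de by (simp add: distrib_left)
        ultimately have "\<bar>real_of_int (int ?d * n i + sw h n (h i))\<bar> < real ?d + 1" by simp
        then have "\<bar>int ?d * n i + sw h n (h i)\<bar> < int ?d + 1" by linarith
        then show "\<bar>int ?d * n i + sw h n (h i)\<bar> \<le> int ?d" by linarith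
      qed
      have Z: "int ?d * n il + sw h n (?d - 1) = 0"
        using mm(3) swn[of "?d - 1"] unfolding g_def n_def by (simp add: algebra_simps)
      have "n i = 0" for i using key[OF bij T il Z] .
      then show "m = m'" unfolding n_def by auto
    qed
    have "finite (g ` Mp)" using grange by (rule finite_subset) simp
    then have fin: "finite Mp" using ginj by (rule finite_imageD)
    have "card (neighborhood P e p) \<le> card Mp" unfolding nb using fin by (rule card_image_le)
    also have "card Mp = card (g ` Mp)" using ginj by (simp add: card_image)
    also have "\<dots> \<le> card {F - int ?d .. F}" using grange by (intro card_mono) auto
    also have "\<dots> = ?d + 1" by simp
    finally show ?thesis using fin nb by simp
  qed
  show ?thesis
    using uhp part sec unfolding secluded_def e_def by blast
qed

end
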